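(* Let $X$ be a finite set, $f:2^X\to\mathbb{R}_{\ge0}$ a normalized monotone submodular function, $n\ge 2$ an integer with $n\le|X|$, and $S^*\in\arg\max_{S\subseteq X,\,|S|\le n}f(S)$. Let $S=S_n=\{x_1,\dots,x_n\}$ be produced by the optimistic algorithm ($S_0=\emptyset$, $x_i\in\arg\max_{x\in X\setminus S_{i-1}}\bar f(x\mid S_{i-1})$, $S_i=S_{i-1}\cup\{x_i\}$), and assume $\bar f(x_i\mid S_{i-1})>0$ for $3\le i\le n$. Then \[ f(S)\ \ge\ \left(1-e^{-\frac{1}{n}\left(2+\sum_{i=3}^n \frac{f(x_i\mid S_{i-1})}{\bar f(x_i\mid S_{i-1})}\right)}\right) f(S^* ). \] Equivalently, in terms of the 2-marginal curvature $c_2(x\mid S)=1-f(x\mid S)/\bar f(x\mid S)$, \[ f(S)\ \ge\ \left(1-e^{-\frac{1}{n}\left(2+\sum_{i=3}^n (1-c_2(x_i\mid S_{i-1}))\right)}\right) f(S^* ). \]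
   Context: $f(x\mid A):=f(A\cup\{x\})-f(A)$, $f(x):=f(\{x\})$, $f(x\mid y):=f(x\mid\{y\})$. Pairwise upper estimate: $\bar f(x\mid S):=\min_{A\subseteq S,\,|A|\le1} f(x\mid A)$ (so $\bar f(x\mid\emptyset)=f(x)$ and $\bar f(x\mid S)=\min_{y\in S}f(x\mid y)$ for $S\neq\emptyset$). The $k$-marginal curvature of $f$ at $x\in X\setminus S$ given $S$ is $c_k(x\mid S)=1-\max_{A\subseteq S,|A|<k} f(x\mid S)/f(x\mid A)$; for $k=2$ this equals $1-f(x\mid S)/\bar f(x\mid S)$. *)

theory Defs
  imports Complex_Main
begin

definition marg :: "('a set \<Rightarrow> real) \<Rightarrow> 'a \<Rightarrow> 'a set \<Rightarrow> real" where
  "marg f x A = f (insert x A) - f A"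

definition fbar :: "('a set \<Rightarrow> real) \<Rightarrow> 'a \<Rightarrow> 'a set \<Rightarrow> real" where
  "fbar f x S = Min ((\<lambda>A. marg f x A) ` {A. A \<subseteq> S \<and> card A \<le> 1 \<and> finite A})"

definition curv2 :: "('a set \<Rightarrow> real) \<Rightarrow> 'a \<Rightarrow> 'a set \<Rightarrow> real" where
  "curv2 f x S = 1 - marg f x S / fbar f x S"

definition normalized :: "('a set \<Rightarrow> real) \<Rightarrow> bool" where
  "normalized f \<longleftrightarrow> f {} = 0"

definition monotone_set_fun :: "'a set \<Rightarrow> ('a set \<Rightarrow> real) \<Rightarrow> bool" where
  "monotone_set_fun X f \<longleftrightarrow> (\<forall>A B. A \<subseteq> B \<and> B \<subseteq> X \<longrightarrow> f A \<le> f B)"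

definition submodular :: "'a set \<Rightarrow> ('a set \<Rightarrow> real) \<Rightarrow> bool" where
  "submodular X f \<longleftrightarrow> (\<forall>A B. A \<subseteq> X \<and> B \<subseteq> X \<longrightarrow> f (A \<union> B) + f (A \<inter> B) \<le> f A + f B)"

definition prefix_set :: "(nat \<Rightarrow> 'a) \<Rightarrow> nat \<Rightarrow> 'a set" where
  "prefix_set x i = x ` {1..i}"

definition optimistic_run :: "'a set \<Rightarrow> ('a set \<Rightarrow> real) \<Rightarrow> nat \<Rightarrow> (nat \<Rightarrow> 'a) \<Rightarrow> bool" where
  "optimistic_run X f n x \<longleftrightarrow>
     (\<forall>i\<in>{1..n}. x i \<in> X - prefix_set x (i - 1) \<and>
        (\<forall>y\<in>X - prefix_set x (i - 1). fbar f y (prefix_set x (i - 1)) \<le> fbar f (x i) (prefix_set x (i - 1))))"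

end

theory Submission
  imports Defs
begin

lemma dimin:
  assumes mono: "monotone_set_fun X f" and submod: "submodular X f"
    and "A \<subseteq> B" "B \<subseteq> X" "y \<in> X"
  shows "marg f y B \<le> marg f y A"
proof (cases "y \<in> B")
  case True
  have "marg f y B = 0" using True by (simp add: marg_def insert_absorb)
  moreover have "f A \<le> f (insert y A)" using mono assms unfolding monotone_set_fun_def
    by (metis insert_subset subset_insertI subset_trans)
  ultimately show ?thesis by (simp add: marg_def)
next
  case False
  have u: "insert y A \<union> B = insert y B" using assms by auto
  have i: "insert y A \<inter> B = A" using assms False by auto
  have "f (insert y A \<union> B) + f (insert y A \<inter> B) \<le> f (insert y A) + f B"
    using submod assms unfolding submodular_def by (metis insert_subset subset_trans)
  then show ?thesis using u i by (simp add: marg_def)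
qed

lemma marg_nonneg:
  assumes mono: "monotone_set_fun X f" and "A \<subseteq> X" "y \<in> X"
  shows "marg f y A \<ge> 0"
  using assms unfolding monotone_set_fun_def marg_def by (metis diff_ge_0_iff_ge insert_subset subset_insertI)

lemma fbar_facts:
  assumes "finite S"
  shows "finite {A. A \<subseteq> S \<and> card A \<le> 1 \<and> finite A}" "{} \<in> {A. A \<subseteq> S \<and> card A \<le> 1 \<and> finite A}"
  using assms by (auto intro: rev_finite_subset[of "Pow S"])

lemma fbar_nonneg:
  assumes mono: "monotone_set_fun X f" and "S \<subseteq> X" "finite S" "y \<in> X"
  shows "fbar f y S \<ge> 0"
proof -
  have "fbar f y S \<in> (\<lambda>A. marg f y A) ` {A. A \<subseteq> S \<and> card A \<le> 1 \<and> finite A}"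
    unfolding fbar_def using fbar_facts[OF assms(3)] by (intro Min_in) (auto intro!: exI[of _ "{}"])
  then obtain A where "A \<subseteq> S" "fbar f y S = marg f y A" by auto
  then show ?thesis using marg_nonneg[OF mono, of A y] assms by auto
qed

lemma marg_le_fbar:
  assumes mono: "monotone_set_fun X f" and submod: "submodular X f"
    and "S \<subseteq> X" "finite S" "y \<in> X"
  shows "marg f y S \<le> fbar f y S"
proof -
  have "fbar f y S \<in> (\<lambda>A. marg f y A) ` {A. A \<subseteq> S \<and> card A \<le> 1 \<and> finite A}"
    unfolding fbar_def using fbar_facts[OF assms(4)] by (intro Min_in) (auto intro!: exI[of _ "{}"])
  then obtain A where "A \<subseteq> S" "fbar f y S = marg f y A" by auto
  then show ?thesis using dimin[OF mono submod, of A S y] assms by auto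
qed

lemma fbar_le_marg_small:
  assumes "finite S" "card S \<le> 1"
  shows "fbar f y S \<le> marg f y S"
  unfolding fbar_def using fbar_facts[OF assms(1)] assms by (intro Min_le) auto

lemma union_bound:
  assumes mono: "monotone_set_fun X f" and submod: "submodular X f"
    and "finite T" "T \<subseteq> X" "S \<subseteq> X"
  shows "f (S \<union> T) \<le> f S + (\<Sum>y\<in>T. marg f y S)"
  using assms(3,4)
proof (induction T rule: finite_induct)
  case empty
  then show ?case by simp
next
  case (insert y T)
  have "f (S \<union> insert y T) = f (S \<union> T) + marg f y (S \<union> T)"
    by (simp add: marg_def)
  also have "marg f y (S \<union> T) \<le> marg f y S"
    using dimin[OF mono submod, of S "S \<union> T" y] insert assms by auto
  finally show ?case using insert by auto
qed

theorem corollary1: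
  fixes X :: "'a set" and f :: "'a set \<Rightarrow> real" and n :: nat
    and Sopt :: "'a set" and x :: "nat \<Rightarrow> 'a"
  assumes finX: "finite X"
    and nonneg: "\<forall>A. A \<subseteq> X \<longrightarrow> f A \<ge> 0"
    and norm: "normalized f"
    and mono: "monotone_set_fun X f"
    and submod: "submodular X f"
    and n2: "2 \<le> n" and nX: "n \<le> card X"
    and Sopt: "Sopt \<subseteq> X" "card Sopt \<le> n"
      "\<forall>T. T \<subseteq> X \<and> card T \<le> n \<longrightarrow> f T \<le> f Sopt"
    and run: "optimistic_run X f n x"
    and pos: "\<forall>i\<in>{3..n}. fbar f (x i) (prefix_set x (i - 1)) > 0"
  shows "f (prefix_set x n) \<ge>
           (1 - exp (- (1 / real n) * (2 + (\<Sum>i=3..n.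
              marg f (x i) (prefix_set x (i - 1)) / fbar f (x i) (prefix_set x (i - 1)))))) * f Sopt
       \<and> f (prefix_set x n) \<ge>
           (1 - exp (- (1 / real n) * (2 + (\<Sum>i=3..n.
              1 - curv2 f (x i) (prefix_set x (i - 1)))))) * f Sopt"
proof -
  define S where "S = prefix_set x"
  define fs where "fs = f Sopt"
  define r where "r = (\<lambda>i. if i \<le> 2 then 1 else marg f (x i) (S (i - 1)) / fbar f (x i) (S (i - 1)))"
  have xX: "x i \<in> X" if "i \<in> {1..n}" for i using run that unfolding optimistic_run_def by auto
  have xnot: "x i \<notin> S (i - 1)" if "i \<in> {1..n}" for i
    using run that unfolding optimistic_run_def S_def by auto
  have best: "fbar f y (S (i - 1)) \<le> fbar f (x i) (S (i - 1))" if "i \<in> {1..n}" "y \<in> X - S (i - 1)" for i y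
    using run that unfolding optimistic_run_def S_def by auto
  have SX: "S k \<subseteq> X" if "k \<le> n" for k using xX that unfolding S_def prefix_set_def by auto
  have Sfin: "finite (S k)" for k unfolding S_def prefix_set_def by auto
  have Scard: "card (S k) \<le> k" for k unfolding S_def prefix_set_def
    using card_image_le[of "{1..k}" x] by auto
  have S0: "S 0 = {}" unfolding S_def prefix_set_def by auto
  have SSuc: "S (Suc k) = insert (x (Suc k)) (S k)" for k
    unfolding S_def prefix_set_def by (simp add: atLeastAtMostSuc_conv)
  have fs0: "fs \<ge> 0" using nonneg Sopt by (auto simp: fs_def)
  have gapb: "fs - f (S (i - 1)) \<le> real n * fbar f (x i) (S (i - 1))" if i: "i \<in> {1..n}" for i
  proof -
    let ?T = "S (i - 1)"
    have "i - 1 \<le> n" using i by auto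
    then have TX: "?T \<subseteq> X" by (rule SX)
    have fb0: "fbar f (x i) ?T \<ge> 0" using fbar_nonneg[OF mono TX Sfin xX[OF i]] .
    have "fs \<le> f (?T \<union> Sopt)" unfolding fs_def using mono TX Sopt(1)
      unfolding monotone_set_fun_def by auto
    also have "\<dots> \<le> f ?T + (\<Sum>y\<in>Sopt. marg f y ?T)"
      using union_bound[OF mono submod _ Sopt(1) TX] finX Sopt(1) finite_subset by blast
    also have "(\<Sum>y\<in>Sopt. marg f y ?T) \<le> (\<Sum>y\<in>Sopt. fbar f (x i) ?T)"
    proof (rule sum_mono)
      fix y assume y: "y \<in> Sopt"
      show "marg f y ?T \<le> fbar f (x i) ?T"
      proof (cases "y \<in> ?T")
        case True
        then have "marg f y ?T = 0" by (simp add: marg_def insert_absorb)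
        then show ?thesis using fb0 by simp
      next
        case False
        have "marg f y ?T \<le> fbar f y ?T"
          using marg_le_fbar[OF mono submod TX Sfin] y Sopt(1) by auto
        also have "\<dots> \<le> fbar f (x i) ?T" using best[OF i] y Sopt(1) False by auto
        finally show ?thesis .
      qed
    qed
    also have "(\<Sum>y\<in>Sopt. fbar f (x i) ?T) = real (card Sopt) * fbar f (x i) ?T" by simp
    also have "\<dots> \<le> real n * fbar f (x i) ?T"
      using Sopt(2) fb0 by (intro mult_right_mono) auto
    finally show ?thesis by simp
  qed
  have r01: "0 \<le> r i \<and> r i \<le> 1" if i: "i \<in> {1..n}" for i
  proof (cases "i \<le> 2")
    case True then show ?thesis by (simp add: r_def)
  next
    case False
    have TX: "S (i - 1) \<subseteq> X" using i by (intro SX) auto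
    have p: "fbar f (x i) (S (i - 1)) > 0" using pos i False unfolding S_def by auto
    have "marg f (x i) (S (i - 1)) \<ge> 0" using marg_nonneg[OF mono TX xX[OF i]] .
    moreover have "marg f (x i) (S (i - 1)) \<le> fbar f (x i) (S (i - 1))"
      using marg_le_fbar[OF mono submod TX Sfin xX[OF i]] .
    ultimately show ?thesis using p False by (simp add: r_def divide_le_eq_1)
  qed
  have step: "marg f (x i) (S (i - 1)) \<ge> r i / real n * (fs - f (S (i - 1)))" if i: "i \<in> {1..n}" for i
  proof (cases "i \<le> 2")
    case True
    have "card (S (i - 1)) \<le> 1" using Scard[of "i - 1"] True by linarith
    then have "fbar f (x i) (S (i - 1)) \<le> marg f (x i) (S (i - 1))"
      by (rule fbar_le_marg_small[OF Sfin])
    moreover have "r i = 1" using True by (simp add: r_def)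
    moreover have "(fs - f (S (i - 1))) / real n \<le> fbar f (x i) (S (i - 1))"
      using gapb[OF i] n2 by (simp add: divide_le_eq mult.commute)
    ultimately show ?thesis by simp
  next
    case False
    have p: "fbar f (x i) (S (i - 1)) > 0" using pos i False unfolding S_def by auto
    have e: "marg f (x i) (S (i - 1)) = r i * fbar f (x i) (S (i - 1))"
      using p False by (simp add: r_def)
    have "r i / real n * (fs - f (S (i - 1))) \<le> r i / real n * (real n * fbar f (x i) (S (i - 1)))"
      using gapb[OF i] r01[OF i] by (intro mult_left_mono) auto
    also have "\<dots> = r i * fbar f (x i) (S (i - 1))" using n2 by simp
    finally show ?thesis using e by simp
  qed
  have ind: "fs - f (S k) \<le> (\<Prod>i=1..k. 1 - r i / real n) * fs" if "k \<le> n" for k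
    using that
  proof (induction k)
    case 0
    then show ?case using norm S0 by (simp add: normalized_def)
  next
    case (Suc k)
    have i: "Suc k \<in> {1..n}" using Suc by auto
    have c0: "1 - r (Suc k) / real n \<ge> 0" using r01[OF i] n2 by (simp add: field_simps)
    have "fs - f (S (Suc k)) = (fs - f (S k)) - marg f (x (Suc k)) (S k)"
      using SSuc by (simp add: marg_def)
    also have "\<dots> \<le> (1 - r (Suc k) / real n) * (fs - f (S k))"
      using step[OF i] by (simp add: algebra_simps)
    also have "\<dots> \<le> (1 - r (Suc k) / real n) * ((\<Prod>i=1..k. 1 - r i / real n) * fs)"
      using Suc c0 by (intro mult_left_mono) auto
    finally show ?case by (simp add: algebra_simps)
  qed
  have "(\<Prod>i=1..n. 1 - r i / real n) \<le> (\<Prod>i=1..n. exp (- (r i / real n)))"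
  proof (rule prod_mono)
    fix i assume i: "i \<in> {1..n}"
    show "0 \<le> 1 - r i / real n \<and> 1 - r i / real n \<le> exp (- (r i / real n))"
      using r01[OF i] n2 exp_ge_add_one_self[of "- (r i / real n)"] by (simp add: field_simps)
  qed
  also have "\<dots> = exp (- (\<Sum>i=1..n. r i) / real n)"
    by (simp add: exp_sum[symmetric] sum_negf sum_divide_distrib)
  finally have P: "(\<Prod>i=1..n. 1 - r i / real n) \<le> exp (- (\<Sum>i=1..n. r i) / real n)" .
  have split: "{1..n} = {1,2} \<union> {3..n}" using n2 by auto
  have sr: "(\<Sum>i=1..n. r i) = 2 + (\<Sum>i=3..n. marg f (x i) (S (i - 1)) / fbar f (x i) (S (i - 1)))"
    unfolding split by (subst sum.union_disjoint) (auto simp: r_def)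
  have main: "f (S n) \<ge> (1 - exp (- (1 / real n) * (2 + (\<Sum>i=3..n.
              marg f (x i) (S (i - 1)) / fbar f (x i) (S (i - 1)))))) * fs"
  proof -
    have A: "fs - f (S n) \<le> exp (- (\<Sum>i=1..n. r i) / real n) * fs"
      using ind[of n] P fs0 mult_right_mono[OF P fs0] by linarith
    have gen: "\<And>s::real. - s / real n = - (1 / real n) * s" by simp
    have B: "- (\<Sum>i=1..n. r i) / real n = - (1 / real n) * (2 + (\<Sum>i=3..n.
              marg f (x i) (S (i - 1)) / fbar f (x i) (S (i - 1))))" unfolding sr by (rule gen)
    show ?thesis using A unfolding B by (simp add: algebra_simps)
  qed
  have cv: "(\<Sum>i=3..n. 1 - curv2 f (x i) (S (i - 1))) = (\<Sum>i=3..n.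
              marg f (x i) (S (i - 1)) / fbar f (x i) (S (i - 1)))"
    by (simp add: curv2_def)
  show ?thesis using main cv unfolding S_def fs_def by simp
qed

end
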